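(* Consider the extreme Reissner–Nordström case $a=0$, $Q\neq0$, $M=\rho=|Q|$. Then for every half-integer $k$ and all $m>0$, $e\in\mathbb{R}$, there is no energy eigenvalue $\omega\in\mathbb{R}$; i.e., bound state solutions of the Dirac equation (of the separated form considered) do not exist in the extreme Reissner–Nordström geometry.
   Context: Fix real numbers $M>0$, $a$, $Q$ with $M^2=a^2+Q^2$ and put $\rho:=M$. Fix the rest mass $m>0$ and charge $e\in\mathbb{R}$ of a Dirac particle and a half-integer $k\in\{\pm\frac12,\pm\frac32,\dots\}$. For $\omega,\lambda\in\mathbb{R}$ consider the radial system for $f:(\rho,\infty)\to\mathbb{C}^2$, $$\begin{pmatrix}(r-\rho)\frac{d}{dr}+\frac{iV(r)}{r-\rho} & imr-\lambda\\ -imr-\lambda & (r-\rho)\frac{d}{dr}-\frac{iV(r)}{r-\rho}\end{pmatrix}f(r)=0,\qquad V(r):=\omega(r^2+a^2)+ka+eQr,$$ and the angular system for $g:(0,\pi)\to\mathbb{C}^2$, $$\begin{pmatrix}\frac{d}{d\theta}+\frac{\cot\theta}{2}-W(\theta) & -am\cos\theta+\lambda\\ am\cos\theta+\lambda & -\frac{d}{d\theta}-\frac{\cot\theta}{2}-W(\theta)\end{pmatrix}g(\theta)=0,\qquad W(\theta):=a\omega\sin\theta+\frac{k}{\sin\theta}.$$ A number $\omega\in\mathbb{R}$ is called an energy eigenvalue (for azimuthal quantum number $k$) if there exist $\lambda\in\mathbb{R}$ and nontrivial solutions $f$ of the radial system and $g$ of the angular system with $$\int_\rho^\infty|f(r)|^2\frac{r^2+a^2}{(r-\rho)^2}\,dr<\infty,\qquad\int_0^\pi|g(\theta)|^2\sin\theta\,d\theta<\infty.$$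 *)

theory Defs
  imports "HOL-Analysis.Analysis"
begin

definition half_integer :: "real \<Rightarrow> bool" where
  "half_integer k \<longleftrightarrow> (\<exists>n::int. k = real_of_int n + 1/2)"

definition radV :: "real \<Rightarrow> real \<Rightarrow> real \<Rightarrow> real \<Rightarrow> real \<Rightarrow> real \<Rightarrow> real" where
  "radV a Q e k \<omega> r = \<omega> * (r\<^sup>2 + a\<^sup>2) + k * a + e * Q * r"

definition angW :: "real \<Rightarrow> real \<Rightarrow> real \<Rightarrow> real \<Rightarrow> real" where
  "angW a k \<omega> \<theta> = a * \<omega> * sin \<theta> + k / sin \<theta>"

text \<open>Classical solution of the radial system on (rho, infinity), rho = M;
  f = (f1, f2).\<close>
definition radial_solution ::
  "real \<Rightarrow> real \<Rightarrow> real \<Rightarrow> real \<Rightarrow> real \<Rightarrow> real \<Rightarrow> real \<Rightarrow> real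
   \<Rightarrow> (real \<Rightarrow> complex) \<Rightarrow> (real \<Rightarrow> complex) \<Rightarrow> bool" where
  "radial_solution M a Q m e k \<omega> lam f1 f2 \<longleftrightarrow>
     (\<forall>r. M < r \<longrightarrow> (\<exists>d1 d2.
        (f1 has_vector_derivative d1) (at r) \<and> (f2 has_vector_derivative d2) (at r) \<and>
        of_real (r - M) * d1 + \<i> * of_real (radV a Q e k \<omega> r / (r - M)) * f1 r
          + (\<i> * of_real (m * r) - of_real lam) * f2 r = 0 \<and>
        (- \<i> * of_real (m * r) - of_real lam) * f1 r + of_real (r - M) * d2
          - \<i> * of_real (radV a Q e k \<omega> r / (r - M)) * f2 r = 0))"

definition angular_solution ::
  "real \<Rightarrow> real \<Rightarrow> real \<Rightarrow> real \<Rightarrow> real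
   \<Rightarrow> (real \<Rightarrow> complex) \<Rightarrow> (real \<Rightarrow> complex) \<Rightarrow> bool" where
  "angular_solution a m k \<omega> lam g1 g2 \<longleftrightarrow>
     (\<forall>\<theta>. 0 < \<theta> \<and> \<theta> < pi \<longrightarrow> (\<exists>d1 d2.
        (g1 has_vector_derivative d1) (at \<theta>) \<and> (g2 has_vector_derivative d2) (at \<theta>) \<and>
        d1 + of_real (cot \<theta> / 2 - angW a k \<omega> \<theta>) * g1 \<theta>
          + of_real (- a * m * cos \<theta> + lam) * g2 \<theta> = 0 \<and>
        of_real (a * m * cos \<theta> + lam) * g1 \<theta> - d2
          - of_real (cot \<theta> / 2 + angW a k \<omega> \<theta>) * g2 \<theta> = 0))"

definition energy_eigenvalue ::
  "real \<Rightarrow> real \<Rightarrow> real \<Rightarrow> real \<Rightarrow> real \<Rightarrow> real \<Rightarrow> real \<Rightarrow> bool" where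
  "energy_eigenvalue M a Q m e k \<omega> \<longleftrightarrow>
     (\<exists>lam::real. \<exists>f1 f2 g1 g2.
        radial_solution M a Q m e k \<omega> lam f1 f2 \<and>
        (\<exists>r. M < r \<and> (f1 r \<noteq> 0 \<or> f2 r \<noteq> 0)) \<and>
        angular_solution a m k \<omega> lam g1 g2 \<and>
        (\<exists>\<theta>. 0 < \<theta> \<and> \<theta> < pi \<and> (g1 \<theta> \<noteq> 0 \<or> g2 \<theta> \<noteq> 0)) \<and>
        (\<lambda>r. ((cmod (f1 r))\<^sup>2 + (cmod (f2 r))\<^sup>2) * (r\<^sup>2 + a\<^sup>2) / (r - M)\<^sup>2)
          integrable_on {M<..} \<and>
        (\<lambda>\<theta>. ((cmod (g1 \<theta>))\<^sup>2 + (cmod (g2 \<theta>))\<^sup>2) * sin \<theta>)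
          integrable_on {0<..<pi})"

end

theory Submission
  imports Defs
begin


lemma Re_deriv:
  assumes "(f has_vector_derivative d) (at r)"
  shows "((\<lambda>x. Re (f x)) has_real_derivative Re d) (at r)"
  using bounded_linear.has_vector_derivative[OF bounded_linear_Re assms]
  by (simp add: has_real_derivative_iff_has_vector_derivative)

lemma Im_deriv:
  assumes "(f has_vector_derivative d) (at r)"
  shows "((\<lambda>x. Im (f x)) has_real_derivative Im d) (at r)"
  using bounded_linear.has_vector_derivative[OF bounded_linear_Im assms]
  by (simp add: has_real_derivative_iff_has_vector_derivative)

lemma eq_divI: "(D::real) \<noteq> 0 \<Longrightarrow> D * X = Y \<Longrightarrow> X = Y / D"
  by (simp add: field_simps)

lemma radial_local:
  assumes rs: "radial_solution M 0 Q m e k \<omega> lam f1 f2" and r: "M < r"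
  defines "S \<equiv> radV 0 Q e k \<omega> r / (r - M)"
  shows "\<exists>A1 B1 A2 B2.
    ((\<lambda>x. Re (f1 x)) has_real_derivative A1) (at r) \<and>
    ((\<lambda>x. Im (f1 x)) has_real_derivative B1) (at r) \<and>
    ((\<lambda>x. Re (f2 x)) has_real_derivative A2) (at r) \<and>
    ((\<lambda>x. Im (f2 x)) has_real_derivative B2) (at r) \<and>
    (r - M) * A1 = S * Im (f1 r) + m * r * Im (f2 r) + lam * Re (f2 r) \<and>
    (r - M) * B1 = - S * Re (f1 r) - m * r * Re (f2 r) + lam * Im (f2 r) \<and>
    (r - M) * A2 = lam * Re (f1 r) - m * r * Im (f1 r) - S * Im (f2 r) \<and>
    (r - M) * B2 = m * r * Re (f1 r) + lam * Im (f1 r) + S * Re (f2 r)"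
proof -
  obtain d1 d2 where d: "(f1 has_vector_derivative d1) (at r)" "(f2 has_vector_derivative d2) (at r)"
    and e1: "of_real (r - M) * d1 + \<i> * of_real S * f1 r
          + (\<i> * of_real (m * r) - of_real lam) * f2 r = 0"
    and e2: "(- \<i> * of_real (m * r) - of_real lam) * f1 r + of_real (r - M) * d2
          - \<i> * of_real S * f2 r = 0"
    using rs r unfolding radial_solution_def S_def by blast
  have "Re (of_real (r - M) * d1 + \<i> * of_real S * f1 r
          + (\<i> * of_real (m * r) - of_real lam) * f2 r) = 0"
       "Im (of_real (r - M) * d1 + \<i> * of_real S * f1 r
          + (\<i> * of_real (m * r) - of_real lam) * f2 r) = 0"
       "Re ((- \<i> * of_real (m * r) - of_real lam) * f1 r + of_real (r - M) * d2
          - \<i> * of_real S * f2 r) = 0"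
       "Im ((- \<i> * of_real (m * r) - of_real lam) * f1 r + of_real (r - M) * d2
          - \<i> * of_real S * f2 r) = 0"
    using e1 e2 by simp_all
  hence "(r - M) * Re d1 = S * Im (f1 r) + m * r * Im (f2 r) + lam * Re (f2 r)"
    "(r - M) * Im d1 = - S * Re (f1 r) - m * r * Re (f2 r) + lam * Im (f2 r)"
    "(r - M) * Re d2 = lam * Re (f1 r) - m * r * Im (f1 r) - S * Im (f2 r)"
    "(r - M) * Im d2 = m * r * Re (f1 r) + lam * Im (f1 r) + S * Re (f2 r)"
    by (simp_all add: algebra_simps)
  thus ?thesis using Re_deriv[OF d(1)] Im_deriv[OF d(1)] Re_deriv[OF d(2)] Im_deriv[OF d(2)]
    by blast
qed

lemma radial_quad:
  assumes rs: "radial_solution M 0 Q m e k \<omega> lam f1 f2" and r: "M < r"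
  defines "S \<equiv> radV 0 Q e k \<omega> r / (r - M)"
  defines "N1 \<equiv> \<lambda>x. (cmod (f1 x))\<^sup>2" and "N2 \<equiv> \<lambda>x. (cmod (f2 x))\<^sup>2"
  defines "u \<equiv> \<lambda>x. Re (f1 x) * Re (f2 x) + Im (f1 x) * Im (f2 x)"
  defines "v \<equiv> \<lambda>x. Re (f1 x) * Im (f2 x) - Im (f1 x) * Re (f2 x)"
  shows "(N1 has_real_derivative 2 * (m * r * v r + lam * u r) / (r - M)) (at r)"
    "(N2 has_real_derivative 2 * (m * r * v r + lam * u r) / (r - M)) (at r)"
    "(u has_real_derivative (- 2 * S * v r + lam * (N1 r + N2 r)) / (r - M)) (at r)"
    "(v has_real_derivative (2 * S * u r + m * r * (N1 r + N2 r)) / (r - M)) (at r)"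
proof -
  obtain A1 B1 A2 B2 where
    D: "((\<lambda>x. Re (f1 x)) has_real_derivative A1) (at r)"
    "((\<lambda>x. Im (f1 x)) has_real_derivative B1) (at r)"
    "((\<lambda>x. Re (f2 x)) has_real_derivative A2) (at r)"
    "((\<lambda>x. Im (f2 x)) has_real_derivative B2) (at r)"
    and E: "(r - M) * A1 = S * Im (f1 r) + m * r * Im (f2 r) + lam * Re (f2 r)"
    "(r - M) * B1 = - S * Re (f1 r) - m * r * Re (f2 r) + lam * Im (f2 r)"
    "(r - M) * A2 = lam * Re (f1 r) - m * r * Im (f1 r) - S * Im (f2 r)"
    "(r - M) * B2 = m * r * Re (f1 r) + lam * Im (f1 r) + S * Re (f2 r)"
    using radial_local[OF rs r] unfolding S_def by blast
  have rM: "r - M \<noteq> 0" using r by simp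
  have N1e: "N1 = (\<lambda>x. Re (f1 x) * Re (f1 x) + Im (f1 x) * Im (f1 x))"
    unfolding N1_def by (rule ext, subst cmod_power2) (simp add: power2_eq_square)
  have N2e: "N2 = (\<lambda>x. Re (f2 x) * Re (f2 x) + Im (f2 x) * Im (f2 x))"
    unfolding N2_def by (rule ext, subst cmod_power2) (simp add: power2_eq_square)
  let ?a1 = "Re (f1 r)" and ?b1 = "Im (f1 r)" and ?a2 = "Re (f2 r)" and ?b2 = "Im (f2 r)"
  have d1: "(N1 has_real_derivative (A1 * ?a1 + A1 * ?a1 + (B1 * ?b1 + B1 * ?b1))) (at r)"
    unfolding N1e by (intro DERIV_add DERIV_mult DERIV_diff D)
  have d2: "(N2 has_real_derivative (A2 * ?a2 + A2 * ?a2 + (B2 * ?b2 + B2 * ?b2))) (at r)"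
    unfolding N2e by (intro DERIV_add DERIV_mult DERIV_diff D)
  have d3: "(u has_real_derivative (A1 * ?a2 + A2 * ?a1 + (B1 * ?b2 + B2 * ?b1))) (at r)"
    unfolding u_def by (intro DERIV_add DERIV_mult DERIV_diff D)
  have d4: "(v has_real_derivative (A1 * ?b2 + B2 * ?a1 - (B1 * ?a2 + A2 * ?b1))) (at r)"
    unfolding v_def by (intro DERIV_add DERIV_mult DERIV_diff D)
  have x1: "A1 * ?a1 + A1 * ?a1 + (B1 * ?b1 + B1 * ?b1) = 2 * (m * r * v r + lam * u r) / (r - M)"
  proof (rule eq_divI[OF rM])
    have "(r - M) * (A1 * ?a1 + A1 * ?a1 + (B1 * ?b1 + B1 * ?b1))
       = 2 * ?a1 * ((r - M) * A1) + 2 * ?b1 * ((r - M) * B1)" by (simp add: algebra_simps)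
    also have "\<dots> = 2 * (m * r * v r + lam * u r)" unfolding E u_def v_def by (simp add: algebra_simps)
    finally show "(r - M) * (A1 * ?a1 + A1 * ?a1 + (B1 * ?b1 + B1 * ?b1)) = 2 * (m * r * v r + lam * u r)" .
  qed
  show "(N1 has_real_derivative 2 * (m * r * v r + lam * u r) / (r - M)) (at r)"
    using d1 x1 by simp
  have x2: "A2 * ?a2 + A2 * ?a2 + (B2 * ?b2 + B2 * ?b2) = 2 * (m * r * v r + lam * u r) / (r - M)"
  proof (rule eq_divI[OF rM])
    have "(r - M) * (A2 * ?a2 + A2 * ?a2 + (B2 * ?b2 + B2 * ?b2))
       = 2 * ?a2 * ((r - M) * A2) + 2 * ?b2 * ((r - M) * B2)" by (simp add: algebra_simps)
    also have "\<dots> = 2 * (m * r * v r + lam * u r)" unfolding E u_def v_def by (simp add: algebra_simps)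
    finally show "(r - M) * (A2 * ?a2 + A2 * ?a2 + (B2 * ?b2 + B2 * ?b2)) = 2 * (m * r * v r + lam * u r)" .
  qed
  show "(N2 has_real_derivative 2 * (m * r * v r + lam * u r) / (r - M)) (at r)"
    using d2 x2 by simp
  have x3: "A1 * ?a2 + A2 * ?a1 + (B1 * ?b2 + B2 * ?b1) = (- 2 * S * v r + lam * (N1 r + N2 r)) / (r - M)"
  proof (rule eq_divI[OF rM])
    have "(r - M) * (A1 * ?a2 + A2 * ?a1 + (B1 * ?b2 + B2 * ?b1))
       = ?a2 * ((r - M) * A1) + ?a1 * ((r - M) * A2) + ?b2 * ((r - M) * B1) + ?b1 * ((r - M) * B2)" by (simp add: algebra_simps)
    also have "\<dots> = (- 2 * S * v r + lam * (N1 r + N2 r))" unfolding E v_def N1e N2e by (simp add: algebra_simps)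
    finally show "(r - M) * (A1 * ?a2 + A2 * ?a1 + (B1 * ?b2 + B2 * ?b1)) = (- 2 * S * v r + lam * (N1 r + N2 r))" .
  qed
  show "(u has_real_derivative (- 2 * S * v r + lam * (N1 r + N2 r)) / (r - M)) (at r)"
    using d3 x3 by simp
  have x4: "A1 * ?b2 + B2 * ?a1 - (B1 * ?a2 + A2 * ?b1) = (2 * S * u r + m * r * (N1 r + N2 r)) / (r - M)"
  proof (rule eq_divI[OF rM])
    have "(r - M) * (A1 * ?b2 + B2 * ?a1 - (B1 * ?a2 + A2 * ?b1))
       = ?b2 * ((r - M) * A1) + ?a1 * ((r - M) * B2) - ?a2 * ((r - M) * B1) - ?b1 * ((r - M) * A2)" by (simp add: algebra_simps)
    also have "\<dots> = (2 * S * u r + m * r * (N1 r + N2 r))" unfolding E u_def N1e N2e by (simp add: algebra_simps)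
    finally show "(r - M) * (A1 * ?b2 + B2 * ?a1 - (B1 * ?a2 + A2 * ?b1)) = (2 * S * u r + m * r * (N1 r + N2 r))" .
  qed
  show "(v has_real_derivative (2 * S * u r + m * r * (N1 r + N2 r)) / (r - M)) (at r)"
    using d4 x4 by simp
qed



lemma div_inf:
  fixes g :: "real \<Rightarrow> real"
  assumes gi: "g integrable_on {M<..}" and g0: "\<forall>x\<in>{M<..}. 0 \<le> g x"
    and X: "M < X" and c: "c > 0" and gc: "\<forall>x\<ge>X. c \<le> g x"
  shows False
proof -
  define I where "I = integral {M<..} g"
  define Y where "Y = X + (\<bar>I\<bar> + 1) / c"
  have XY: "X \<le> Y" using c by (simp add: Y_def)
  have sub: "{X..Y} \<subseteq> {M<..}" using X by auto
  have gi2: "g integrable_on {X..Y}" using integrable_on_subinterval[OF gi sub] .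
  have "integral {X..Y} (\<lambda>_. c) \<le> integral {X..Y} g"
    using gi2 gc by (intro integral_le) auto
  moreover have "integral {X..Y} (\<lambda>_. c) = \<bar>I\<bar> + 1"
    using XY c by (simp add: Y_def)
  moreover have "integral {X..Y} g \<le> I"
    unfolding I_def using sub gi2 gi g0 by (rule integral_subset_le)
  ultimately show False by linarith
qed

lemma div_zero:
  fixes g :: "real \<Rightarrow> real"
  assumes gi: "g integrable_on {M<..}" and g0: "\<forall>x\<in>{M<..}. 0 \<le> g x"
    and d: "d > 0" and c: "c > 0" and gc: "\<forall>x. M < x \<and> x < M + d \<longrightarrow> c / (x - M) \<le> g x"
  shows False
proof -
  define I where "I = integral {M<..} g"
  define d' where "d' = d / 2"
  define \<epsilon> where "\<epsilon> = d' * exp (- ((\<bar>I\<bar> + 1) / c))"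
  have d'0: "d' > 0" using d by (simp add: d'_def)
  have e0: "\<epsilon> > 0" using d'0 by (simp add: \<epsilon>_def)
  have "exp (- ((\<bar>I\<bar> + 1) / c)) < 1" using c by (simp add: exp_less_one_iff)
  hence ed: "\<epsilon> < d'" using d'0 by (simp add: \<epsilon>_def)
  have lne: "ln \<epsilon> = ln d' - (\<bar>I\<bar> + 1) / c"
    using d'0 by (simp add: \<epsilon>_def ln_mult)
  let ?a = "M + \<epsilon>" and ?b = "M + d'"
  have ab: "?a \<le> ?b" using ed by simp
  have der: "\<forall>x\<in>{?a..?b}. ((\<lambda>x. c * ln (x - M)) has_vector_derivative c / (x - M)) (at x within {?a..?b})"
  proof
    fix x assume x: "x \<in> {?a..?b}"
    hence xM: "x - M > 0" using e0 by simp
    have "((\<lambda>x. c * ln (x - M)) has_real_derivative c * (1 / (x - M))) (at x)"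
      using xM by (auto intro!: derivative_eq_intros)
    thus "((\<lambda>x. c * ln (x - M)) has_vector_derivative c / (x - M)) (at x within {?a..?b})"
      by (simp add: has_real_derivative_iff_has_vector_derivative[symmetric] has_field_derivative_at_within)
  qed
  have hi: "((\<lambda>x. c / (x - M)) has_integral (c * ln (?b - M) - c * ln (?a - M))) {?a..?b}"
    using fundamental_theorem_of_calculus[OF ab, of "\<lambda>x. c * ln (x - M)" "\<lambda>x. c / (x - M)"] der by simp
  have val: "c * ln (?b - M) - c * ln (?a - M) = \<bar>I\<bar> + 1"
    using c by (simp add: lne field_simps)
  have sub: "{?a..?b} \<subseteq> {M<..}" using e0 by auto
  have gi2: "g integrable_on {?a..?b}" using integrable_on_subinterval[OF gi sub] .
  have "integral {?a..?b} (\<lambda>x. c / (x - M)) \<le> integral {?a..?b} g"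
    using gi2 hi gc e0 ed d'0 unfolding d'_def by (intro integral_le) (auto intro: has_integral_integrable)
  moreover have "integral {?a..?b} (\<lambda>x. c / (x - M)) = \<bar>I\<bar> + 1"
    using integral_unique[OF hi] val by simp
  moreover have "integral {?a..?b} g \<le> I"
    unfolding I_def using sub gi2 gi g0 by (rule integral_subset_le)
  ultimately show False by linarith
qed



lemma gron:
  fixes h G h' G' :: "real \<Rightarrow> real"
  assumes ab: "a \<le> b"
    and d: "\<And>x. a \<le> x \<Longrightarrow> x \<le> b \<Longrightarrow> (h has_real_derivative h' x) (at x) \<and> (G has_real_derivative G' x) (at x)"
  shows "(\<forall>x. a \<le> x \<and> x \<le> b \<longrightarrow> h' x + G' x * h x \<ge> 0) \<Longrightarrow> h a * exp (G a) \<le> h b * exp (G b)"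
    and "(\<forall>x. a \<le> x \<and> x \<le> b \<longrightarrow> h' x + G' x * h x \<le> 0) \<Longrightarrow> h b * exp (G b) \<le> h a * exp (G a)"
proof -
  have D: "((\<lambda>x. h x * exp (G x)) has_real_derivative exp (G x) * (h' x + G' x * h x)) (at x)"
    if "a \<le> x" "x \<le> b" for x
    using d[OF that] by (auto intro!: derivative_eq_intros simp: algebra_simps)
  show "(\<forall>x. a \<le> x \<and> x \<le> b \<longrightarrow> h' x + G' x * h x \<ge> 0) \<Longrightarrow> h a * exp (G a) \<le> h b * exp (G b)"
    using DERIV_nonneg_imp_nondecreasing[OF ab, of "\<lambda>x. h x * exp (G x)"] D by force
  show "(\<forall>x. a \<le> x \<and> x \<le> b \<longrightarrow> h' x + G' x * h x \<le> 0) \<Longrightarrow> h b * exp (G b) \<le> h a * exp (G a)"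
    using DERIV_nonpos_imp_nonincreasing[OF ab, of "\<lambda>x. h x * exp (G x)"] D
    by (force intro: mult_nonneg_nonpos)
qed

lemma mono_deriv:
  fixes h h' :: "real \<Rightarrow> real"
  assumes ab: "a \<le> b"
    and d: "\<And>x. a \<le> x \<Longrightarrow> x \<le> b \<Longrightarrow> (h has_real_derivative h' x) (at x)"
  shows "(\<forall>x. a \<le> x \<and> x \<le> b \<longrightarrow> h' x \<ge> 0) \<Longrightarrow> h a \<le> h b"
    and "(\<forall>x. a \<le> x \<and> x \<le> b \<longrightarrow> h' x \<le> 0) \<Longrightarrow> h b \<le> h a"
  using DERIV_nonneg_imp_nondecreasing[OF ab, of h] DERIV_nonpos_imp_nonincreasing[OF ab, of h] d
  by blast+



lemma phi_id:
  fixes D x w m l v u N :: real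
  assumes "D \<noteq> 0" "x \<noteq> 0" "w \<noteq> 0"
  shows "2 * (m * x * v + l * u) / D + (m / w) * ((- 2 * w * x * v + 2 * l * N) / D)
     - (- l / (w * x\<^sup>2) * v + 2 * x * (w * u + m * N) / D * (l / (w * x))) = l * v / (w * x\<^sup>2)"
  using assms by (simp add: field_simps power2_eq_square)

lemma phi_id2:
  fixes D V x m l v u N P Q :: real
  assumes "D \<noteq> 0" "V \<noteq> 0"
  shows "2 * (m * x * v + l * u) / D
          + (P * u + (- 2 * (V / D) * v + 2 * l * N) / D * (m * x * D / V))
          - (Q * v + (2 * (V / D) * u + 2 * m * x * N) / D * (l * D / V))
          = P * u - Q * v"
  using assms by (simp add: field_simps)

lemma core:
  fixes M m lam \<omega> Q e k r0 :: real
  assumes rs: "radial_solution M 0 Q m e k \<omega> lam f1 f2"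
    and M0: "M > 0" and m0: "m > 0"
    and r0: "M < r0" and nz: "f1 r0 \<noteq> 0 \<or> f2 r0 \<noteq> 0"
    and gi: "(\<lambda>r. ((cmod (f1 r))\<^sup>2 + (cmod (f2 r))\<^sup>2) * r\<^sup>2 / (r - M)\<^sup>2) integrable_on {M<..}"
  shows False
proof -
  define N1 where "N1 \<equiv> \<lambda>x. (cmod (f1 x))\<^sup>2"
  define N2 where "N2 \<equiv> \<lambda>x. (cmod (f2 x))\<^sup>2"
  define u where "u \<equiv> \<lambda>x. Re (f1 x) * Re (f2 x) + Im (f1 x) * Im (f2 x)"
  define v where "v \<equiv> \<lambda>x. Re (f1 x) * Im (f2 x) - Im (f1 x) * Re (f2 x)"
  define V where "V \<equiv> \<lambda>x. \<omega> * x\<^sup>2 + e * Q * x"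
  have rV: "radV 0 Q e k \<omega> x = V x" for x by (simp add: radV_def V_def)
  note RQ = radial_quad[OF rs, unfolded rV]
  have dN1: "(N1 has_real_derivative 2 * (m * x * v x + lam * u x) / (x - M)) (at x)" if "M < x" for x
    using RQ(1)[OF that] by (simp add: N1_def N2_def u_def v_def)
  have dN2: "(N2 has_real_derivative 2 * (m * x * v x + lam * u x) / (x - M)) (at x)" if "M < x" for x
    using RQ(2)[OF that] by (simp add: N1_def N2_def u_def v_def)
  have N10: "N1 x \<ge> 0" "N2 x \<ge> 0" for x by (simp_all add: N1_def N2_def)
  define g where "g \<equiv> \<lambda>r. (N1 r + N2 r) * r\<^sup>2 / (r - M)\<^sup>2"
  have gi': "g integrable_on {M<..}" using gi by (simp add: g_def N1_def N2_def)
  have g0: "\<forall>x\<in>{M<..}. 0 \<le> g x" using N10 by (simp add: g_def)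
  have gge: "g x \<ge> N1 x + N2 x" if "M < x" for x
  proof -
    have "(x - M)\<^sup>2 \<le> x\<^sup>2" using that M0 by (intro power_mono) auto
    moreover have "(x - M)\<^sup>2 > 0" using that by simp
    ultimately have "1 \<le> x\<^sup>2 / (x - M)\<^sup>2" by simp
    hence "(N1 x + N2 x) * 1 \<le> (N1 x + N2 x) * (x\<^sup>2 / (x - M)\<^sup>2)"
      using N10 by (intro mult_left_mono) auto
    thus ?thesis by (simp add: g_def)
  qed
  have gge0: "g x \<ge> (N1 x + N2 x) * M\<^sup>2 / (x - M)\<^sup>2" if "M < x" for x
  proof -
    have "M\<^sup>2 \<le> x\<^sup>2" using that M0 by (intro power_mono) auto
    hence "(N1 x + N2 x) * M\<^sup>2 \<le> (N1 x + N2 x) * x\<^sup>2" using N10 by (intro mult_left_mono) auto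
    thus ?thesis unfolding g_def by (intro divide_right_mono) auto
  qed
  have Finf: False if X: "M < X" and c: "c > 0" and h: "\<forall>x\<ge>X. c \<le> N1 x + N2 x" for X c
  proof (rule div_inf[OF gi' g0 X c], intro allI impI)
    fix x assume "X \<le> x"
    thus "c \<le> g x" using h gge[of x] X by force
  qed
  have F0: False if d: "d > 0" and c: "c > 0" and h: "\<forall>x. M < x \<and> x < M + d \<longrightarrow> c * (x - M) \<le> N1 x + N2 x" for d c
  proof -
    have "c * M\<^sup>2 / (x - M) \<le> g x" if "M < x \<and> x < M + d" for x
    proof -
      have xm: "x - M > 0" using that by simp
      have "c * M\<^sup>2 / (x - M) = c * (x - M) * M\<^sup>2 / (x - M)\<^sup>2" using xm by (simp add: power2_eq_square)
      also have "\<dots> \<le> (N1 x + N2 x) * M\<^sup>2 / (x - M)\<^sup>2"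
        using h that by (intro divide_right_mono mult_right_mono) auto
      also have "\<dots> \<le> g x" using gge0 that by simp
      finally show ?thesis .
    qed
    thus False using div_zero[OF gi' g0 d, of "c * M\<^sup>2"] c M0 by auto
  qed
  have cons: "N1 x - N2 x = N1 r0 - N2 r0" if "M < x" for x
  proof -
    have D: "((\<lambda>x. N1 x - N2 x) has_real_derivative 0) (at y)" if "M < y" for y
      using DERIV_diff[OF dN1[OF that] dN2[OF that]] by simp
    have le: "min x r0 \<le> max x r0" by simp
    have D': "((\<lambda>x. N1 x - N2 x) has_real_derivative 0) (at y)" if "min x r0 \<le> y" "y \<le> max x r0" for y
      using D[of y] that \<open>M < x\<close> r0 by auto
    have "N1 (min x r0) - N2 (min x r0) \<le> N1 (max x r0) - N2 (max x r0)"
      by (rule mono_deriv(1)[OF le D']) auto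
    moreover have "N1 (max x r0) - N2 (max x r0) \<le> N1 (min x r0) - N2 (min x r0)"
      by (rule mono_deriv(2)[OF le D']) auto
    ultimately have "N1 (min x r0) - N2 (min x r0) = N1 (max x r0) - N2 (max x r0)" by linarith
    thus ?thesis by (cases "x \<le> r0") (auto simp: min_def max_def)
  qed
  have C0: "N1 r0 - N2 r0 = 0"
  proof (rule ccontr)
    assume ne: "N1 r0 - N2 r0 \<noteq> 0"
    have cy: "N1 y - N2 y = N1 r0 - N2 r0" if "r0 \<le> y" for y
      using cons[of y] that r0 by linarith
    show False
    proof (cases "N1 r0 - N2 r0 > 0")
      case True
      show False
      proof (rule Finf[OF r0 True], intro allI impI)
        fix y assume "r0 \<le> y"
        thus "N1 r0 - N2 r0 \<le> N1 y + N2 y" using cy[of y] N10[of y] by linarith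
      qed
    next
      case False
      hence T: "N2 r0 - N1 r0 > 0" using ne by linarith
      show False
      proof (rule Finf[OF r0 T], intro allI impI)
        fix y assume "r0 \<le> y"
        thus "N2 r0 - N1 r0 \<le> N1 y + N2 y" using cy[of y] N10[of y] by linarith
      qed
    qed
  qed
  have N12: "N2 x = N1 x" if "M < x" for x
    using cons[OF that] C0 by linarith
  have uv: "(u x)\<^sup>2 + (v x)\<^sup>2 = N1 x * N2 x" for x
    unfolding u_def v_def N1_def N2_def cmod_power2 by (simp add: power2_eq_square algebra_simps)
  have ub: "\<bar>u x\<bar> \<le> N1 x" and vb: "\<bar>v x\<bar> \<le> N1 x" if "M < x" for x
  proof -
    have e: "(u x)\<^sup>2 + (v x)\<^sup>2 = (N1 x)\<^sup>2" using uv[of x] N12[OF that] by (simp add: power2_eq_square)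
    have "(u x)\<^sup>2 \<le> (N1 x)\<^sup>2" using e zero_le_power2[of "v x"] by linarith
    hence "\<bar>u x\<bar> \<le> \<bar>N1 x\<bar>" by (simp add: abs_le_square_iff)
    thus "\<bar>u x\<bar> \<le> N1 x" using N10[of x] by simp
    have "(v x)\<^sup>2 \<le> (N1 x)\<^sup>2" using e zero_le_power2[of "u x"] by linarith
    hence "\<bar>v x\<bar> \<le> \<bar>N1 x\<bar>" by (simp add: abs_le_square_iff)
    thus "\<bar>v x\<bar> \<le> N1 x" using N10[of x] by simp
  qed
  have pos0: "N1 r0 > 0"
  proof -
    have "N1 r0 + N2 r0 > 0" using nz N10 unfolding N1_def N2_def
      by (metis add_pos_nonneg add_nonneg_pos norm_eq_zero zero_less_norm_iff zero_less_power)
    thus ?thesis using N12[OF r0] by simp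
  qed
  have dN: "(N1 has_real_derivative 2 * (m * x * v x + lam * u x) / (x - M)) (at x)" if "M < x" for x
    using dN1[OF that] .
  have du: "(u has_real_derivative (- 2 * (V x / (x - M)) * v x + 2 * lam * N1 x) / (x - M)) (at x)" if "M < x" for x
    using RQ(3)[OF that] N12[OF that] by (simp add: N1_def N2_def u_def v_def algebra_simps)
  have dv: "(v has_real_derivative (2 * (V x / (x - M)) * u x + 2 * m * x * N1 x) / (x - M)) (at x)" if "M < x" for x
    using RQ(4)[OF that] N12[OF that] by (simp add: N1_def N2_def u_def v_def algebra_simps)
  have Finf': False if X: "M < X" and c: "c > 0" and h: "\<forall>x\<ge>X. c \<le> N1 x" for X c
  proof (rule Finf[OF X c], intro allI impI)
    fix x assume "X \<le> x"
    thus "c \<le> N1 x + N2 x" using h N10[of x] by (meson add_increasing2 order_trans)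
  qed
  have F0': False if d: "d > 0" and c: "c > 0" and h: "\<forall>x. M < x \<and> x < M + d \<longrightarrow> c * (x - M) \<le> N1 x" for d c
  proof (rule F0[OF d c], intro allI impI)
    fix x assume "M < x \<and> x < M + d"
    thus "c * (x - M) \<le> N1 x + N2 x" using h N10[of x] by (meson add_increasing2 order_trans)
  qed
  have Nder: "\<bar>2 * (m * x * v x + lam * u x) / (x - M)\<bar> \<le> (2 * (m * b + \<bar>lam\<bar>) / (a - M)) * N1 x"
    if ab: "M < a" "a \<le> x" "x \<le> b" for a b x
  proof -
    have x: "M < x" using ab by simp
    have "\<bar>m * x * v x\<bar> \<le> m * b * N1 x"
    proof -
      have "\<bar>m * x * v x\<bar> = (m * x) * \<bar>v x\<bar>" using x M0 m0 by (simp add: abs_mult)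
      also have "\<dots> \<le> (m * b) * N1 x" using vb[OF x] ab M0 m0 N10[of x]
        by (intro mult_mono) auto
      finally show ?thesis by simp
    qed
    moreover have "\<bar>lam * u x\<bar> \<le> \<bar>lam\<bar> * N1 x" using ub[OF x] by (simp add: abs_mult mult_left_mono)
    ultimately have A: "\<bar>m * x * v x + lam * u x\<bar> \<le> (m * b + \<bar>lam\<bar>) * N1 x"
      by (smt (verit) abs_triangle_ineq distrib_right)
    have B: "1 / (x - M) \<le> 1 / (a - M)" using ab by (simp add: frac_le)
    have "\<bar>2 * (m * x * v x + lam * u x) / (x - M)\<bar> = 2 * \<bar>m * x * v x + lam * u x\<bar> * (1 / (x - M))"
      using x by (simp only: abs_divide abs_mult) simp
    also have "\<dots> \<le> 2 * ((m * b + \<bar>lam\<bar>) * N1 x) * (1 / (a - M))"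
    proof (rule mult_mono)
      show "2 * \<bar>m * x * v x + lam * u x\<bar> \<le> 2 * ((m * b + \<bar>lam\<bar>) * N1 x)" using A by simp
      show "1 / (x - M) \<le> 1 / (a - M)" by (rule B)
      show "0 \<le> 2 * ((m * b + \<bar>lam\<bar>) * N1 x)" using ab M0 m0 N10[of x] by simp
      show "0 \<le> 1 / (x - M)" using x by simp
    qed
    also have "\<dots> = (2 * (m * b + \<bar>lam\<bar>) / (a - M)) * N1 x" by simp
    finally show ?thesis .
  qed
  have Nfwd: "N1 b > 0" if ab: "M < a" "a \<le> b" and pa: "N1 a > 0" for a b
  proof -
    define K where "K = 2 * (m * b + \<bar>lam\<bar>) / (a - M)"
    have "N1 a * exp (K * a) \<le> N1 b * exp (K * b)"
    proof (rule gron(1)[OF ab(2), of N1 "\<lambda>x. 2 * (m * x * v x + lam * u x) / (x - M)" "\<lambda>x. K * x" "\<lambda>_. K"])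
      show "(N1 has_real_derivative 2 * (m * x * v x + lam * u x) / (x - M)) (at x) \<and> ((\<lambda>x. K * x) has_real_derivative K) (at x)"
        if "a \<le> x" "x \<le> b" for x
        using dN[of x] that ab by (auto intro!: derivative_eq_intros)
      show "\<forall>x. a \<le> x \<and> x \<le> b \<longrightarrow> 0 \<le> 2 * (m * x * v x + lam * u x) / (x - M) + K * N1 x"
      proof (intro allI impI)
        fix x assume "a \<le> x \<and> x \<le> b"
        hence "\<bar>2 * (m * x * v x + lam * u x) / (x - M)\<bar> \<le> K * N1 x" using Nder[of a x b] ab unfolding K_def by auto
        hence "- (2 * (m * x * v x + lam * u x) / (x - M)) \<le> K * N1 x" by (rule abs_le_D2)
        thus "0 \<le> 2 * (m * x * v x + lam * u x) / (x - M) + K * N1 x" by linarith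
      qed
    qed
    moreover have "N1 a * exp (K * a) > 0" using pa by simp
    ultimately have "N1 b * exp (K * b) > 0" by linarith
    thus ?thesis by (simp add: zero_less_mult_iff)
  qed
  have Nbwd: "N1 a > 0" if ab: "M < a" "a \<le> b" and pb: "N1 b > 0" for a b
  proof -
    define K where "K = 2 * (m * b + \<bar>lam\<bar>) / (a - M)"
    have "N1 b * exp (- K * b) \<le> N1 a * exp (- K * a)"
    proof (rule gron(2)[OF ab(2), of N1 "\<lambda>x. 2 * (m * x * v x + lam * u x) / (x - M)" "\<lambda>x. - K * x" "\<lambda>_. - K"])
      show "(N1 has_real_derivative 2 * (m * x * v x + lam * u x) / (x - M)) (at x) \<and> ((\<lambda>x. - K * x) has_real_derivative - K) (at x)"
        if "a \<le> x" "x \<le> b" for x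
        using dN[of x] that ab by (auto intro!: derivative_eq_intros)
      show "\<forall>x. a \<le> x \<and> x \<le> b \<longrightarrow> 2 * (m * x * v x + lam * u x) / (x - M) + - K * N1 x \<le> 0"
      proof (intro allI impI)
        fix x assume "a \<le> x \<and> x \<le> b"
        hence "\<bar>2 * (m * x * v x + lam * u x) / (x - M)\<bar> \<le> K * N1 x" using Nder[of a x b] ab unfolding K_def by auto
        hence "2 * (m * x * v x + lam * u x) / (x - M) \<le> K * N1 x" by (rule abs_le_D1)
        thus "2 * (m * x * v x + lam * u x) / (x - M) + - K * N1 x \<le> 0" by linarith
      qed
    qed
    moreover have "N1 b * exp (- K * b) > 0" using pb by simp
    ultimately have "N1 a * exp (- K * a) > 0" by linarith
    thus ?thesis by (simp add: zero_less_mult_iff)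
  qed
  show False
  proof (cases "V M = 0")
    case True
    have "(\<omega> * M + e * Q) * M = 0" using True unfolding V_def by (simp add: power2_eq_square algebra_simps)
    hence eQ: "e * Q = - \<omega> * M" using M0 by simp
    have Sx: "V x / (x - M) = \<omega> * x" if "M < x" for x
    proof -
      have "V x = \<omega> * x * (x - M)" unfolding V_def eQ by (simp add: power2_eq_square algebra_simps)
      thus ?thesis using that by simp
    qed
    have dv': "(v has_real_derivative 2 * x * (\<omega> * u x + m * N1 x) / (x - M)) (at x)" if "M < x" for x
      using dv[OF that] Sx[OF that] by (simp add: algebra_simps)
    have du': "(u has_real_derivative (- 2 * \<omega> * x * v x + 2 * lam * N1 x) / (x - M)) (at x)" if "M < x" for x
      using du[OF that] Sx[OF that] by (simp add: algebra_simps)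
    show False
    proof (cases "\<bar>\<omega>\<bar> \<le> m")
      case True
      have vnn: "2 * x * (\<omega> * u x + m * N1 x) / (x - M) \<ge> 0" if "M < x" for x
      proof -
        have "\<bar>\<omega> * u x\<bar> \<le> m * N1 x"
          using mult_mono[OF True ub[OF that]] m0 by (simp add: abs_mult)
        hence "\<omega> * u x + m * N1 x \<ge> 0" by linarith
        thus ?thesis using that M0 by simp
      qed
      have vmono: "v x \<le> v y" if "M < x" "x \<le> y" for x y
        by (rule mono_deriv(1)[OF that(2), of v "\<lambda>x. 2 * x * (\<omega> * u x + m * N1 x) / (x - M)"])
           (use that dv' vnn in auto)
      have v0: "v x = 0" if x: "M < x" for x
      proof (rule ccontr)
        assume "v x \<noteq> 0"
        hence "v x > 0 \<or> v x < 0" by linarith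
        thus False
        proof
          assume p: "v x > 0"
          show False
          proof (rule Finf'[OF x p], intro allI impI)
            fix y assume "x \<le> y"
            thus "v x \<le> N1 y" using vmono[OF x, of y] vb[of y] x by linarith
          qed
        next
          assume n: "v x < 0"
          define d where "d = min 1 (x - M)"
          have d0: "d > 0" using x by (simp add: d_def)
          show False
          proof (rule F0'[OF d0, of "- v x"], use n in simp, intro allI impI)
            fix y assume y: "M < y \<and> y < M + d"
            hence "y \<le> x" "y - M \<le> 1" by (auto simp: d_def)
            hence "v y \<le> v x" using vmono[of y x] y by simp
            hence "- v x \<le> N1 y" using vb[of y] y by linarith
            moreover have "- v x * (y - M) \<le> - v x" using n \<open>y - M \<le> 1\<close> y
              by (simp add: mult_left_le)
            ultimately show "- v x * (y - M) \<le> N1 y" by linarith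
          qed
        qed
      qed
      have key: "\<omega> * u x + m * N1 x = 0" if x: "M < x" for x
      proof -
        have "2 * x * (\<omega> * u x + m * N1 x) / (x - M) = 0"
        proof (rule DERIV_local_const[OF dv'[OF x], of "x - M"])
          show "0 < x - M" using x by simp
          show "\<forall>y. \<bar>x - y\<bar> < x - M \<longrightarrow> v x = v y"
          proof (intro allI impI)
            fix y assume "\<bar>x - y\<bar> < x - M"
            hence "M < y" by (simp add: abs_less_iff)
            thus "v x = v y" using v0[OF x] v0[of y] by simp
          qed
        qed
        thus ?thesis using x M0 by simp
      qed
      show False
      proof (cases "\<bar>\<omega>\<bar> < m")
        case True
        have "m * N1 r0 = - (\<omega> * u r0)" using key[OF r0] by linarith
        also have "\<dots> \<le> \<bar>\<omega>\<bar> * N1 r0"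
          using mult_mono[OF order.refl ub[OF r0], of "\<bar>\<omega>\<bar>"]
          by (simp, metis abs_ge_minus_self abs_mult order_trans)
        finally have "(m - \<bar>\<omega>\<bar>) * N1 r0 \<le> 0" by (simp add: algebra_simps)
        thus False using True pos0 by (simp add: mult_le_0_iff)
      next
        case False
        hence wm: "\<bar>\<omega>\<bar> = m" using \<open>\<bar>\<omega>\<bar> \<le> m\<close> by simp
        hence w0: "\<omega> \<noteq> 0" using m0 by auto
        define p where "p = - 2 * lam * m / \<omega>"
        have ux: "u x = - m * N1 x / \<omega>" if "M < x" for x
        proof -
          have "u x * \<omega> = - m * N1 x" using key[OF that] by (simp add: algebra_simps)
          thus ?thesis using w0 by (simp add: field_simps)
        qed
        have dN': "(N1 has_real_derivative p * N1 x / (x - M)) (at x)" if x: "M < x" for x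
          using dN[OF x] v0[OF x] ux[OF x] by (simp add: p_def mult.assoc)
        show False
        proof (cases "p \<le> 1")
          case True
          have dh: "((\<lambda>x. N1 x / (x - M)) has_real_derivative (p - 1) * N1 x / (x - M)\<^sup>2) (at x)" if x: "M < x" for x
          proof -
            have g1: "((\<lambda>x. x - M) has_real_derivative 1) (at x)" by (auto intro!: derivative_eq_intros)
            have "((\<lambda>x. N1 x / (x - M)) has_real_derivative
                 ((p * N1 x / (x - M)) * (x - M) - N1 x * 1) / ((x - M) * (x - M))) (at x)"
              using DERIV_divide[OF dN'[OF x] g1] x by simp
            moreover have "((p * N1 x / (x - M)) * (x - M) - N1 x * 1) / ((x - M) * (x - M))
                = (p - 1) * N1 x / (x - M)\<^sup>2"
            proof -
              have "(p * N1 x / (x - M)) * (x - M) = p * N1 x" using x by simp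
              thus ?thesis by (simp add: power2_eq_square algebra_simps)
            qed
            ultimately show ?thesis by simp
          qed
          have hmono: "N1 r0 / (r0 - M) \<le> N1 y / (y - M)" if y: "M < y" "y \<le> r0" for y
            by (rule mono_deriv(2)[OF y(2), of _ "\<lambda>x. (p - 1) * N1 x / (x - M)\<^sup>2"])
               (use dh y True N10 in \<open>auto intro!: divide_nonpos_nonneg mult_nonpos_nonneg\<close>)
          have c0: "N1 r0 / (r0 - M) > 0" using pos0 r0 by simp
          show False
          proof (rule F0'[of "r0 - M" "N1 r0 / (r0 - M)"], use r0 in simp, rule c0, intro allI impI)
            fix y assume y: "M < y \<and> y < M + (r0 - M)"
            hence "N1 r0 / (r0 - M) \<le> N1 y / (y - M)" using hmono[of y] by simp
            thus "N1 r0 / (r0 - M) * (y - M) \<le> N1 y" using y by (simp add: field_simps)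
          qed
        next
          case False
          have Nmono: "N1 r0 \<le> N1 y" if y: "r0 \<le> y" for y
            by (rule mono_deriv(1)[OF y, of _ "\<lambda>x. p * N1 x / (x - M)"])
               (use dN' y r0 False N10 in auto)
          show False
            by (rule Finf'[OF r0 pos0]) (use Nmono in auto)
        qed
      qed
    next
      case False
      hence wm: "\<bar>\<omega>\<bar> > m" by simp
      hence w0: "\<omega> \<noteq> 0" using m0 by auto
      have aw: "\<bar>\<omega>\<bar> > 0" using w0 by simp
      define \<delta> where "\<delta> = (\<bar>\<omega>\<bar> - m) / (2 * \<bar>\<omega>\<bar>)"
      have \<delta>0: "\<delta> > 0" using wm aw by (simp add: \<delta>_def)
      have \<delta>1: "\<delta> < 1/2" using m0 aw by (simp add: \<delta>_def field_simps)
      have \<delta>e: "m / \<bar>\<omega>\<bar> = 1 - 2 * \<delta>" using aw by (simp add: \<delta>_def field_simps)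
      define C where "C = \<bar>lam\<bar> / (\<bar>\<omega>\<bar> * \<delta>)"
      have C0: "C \<ge> 0" using aw \<delta>0 by (simp add: C_def)
      define X1 where "X1 = max r0 (C + 1)"
      have X1: "r0 \<le> X1" "C < X1" by (auto simp: X1_def)
      have X1M: "M < X1" using X1 r0 by simp
      define \<Phi> where "\<Phi> = (\<lambda>x. N1 x + (m / \<omega>) * u x - (lam / (\<omega> * x)) * v x)"
      have d\<Phi>: "(\<Phi> has_real_derivative lam * v x / (\<omega> * x\<^sup>2)) (at x)" if x: "M < x" for x
      proof -
        have x0: "x \<noteq> 0" "x - M \<noteq> 0" using x M0 by auto
        have dq: "((\<lambda>x. lam / (\<omega> * x)) has_real_derivative - lam / (\<omega> * x\<^sup>2)) (at x)"
          using x0 w0 by (auto intro!: derivative_eq_intros simp: power2_eq_square field_simps)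
        have "(\<Phi> has_real_derivative
            2 * (m * x * v x + lam * u x) / (x - M)
            + (m / \<omega>) * ((- 2 * \<omega> * x * v x + 2 * lam * N1 x) / (x - M))
            - (- lam / (\<omega> * x\<^sup>2) * v x + 2 * x * (\<omega> * u x + m * N1 x) / (x - M) * (lam / (\<omega> * x)))) (at x)"
          unfolding \<Phi>_def
          by (intro DERIV_diff DERIV_add DERIV_cmult DERIV_mult dN[OF x] du'[OF x] dv'[OF x] dq)
        moreover have "2 * (m * x * v x + lam * u x) / (x - M)
            + (m / \<omega>) * ((- 2 * \<omega> * x * v x + 2 * lam * N1 x) / (x - M))
            - (- lam / (\<omega> * x\<^sup>2) * v x + 2 * x * (\<omega> * u x + m * N1 x) / (x - M) * (lam / (\<omega> * x)))
            = lam * v x / (\<omega> * x\<^sup>2)"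
          using phi_id[OF x0(2) x0(1) w0] by simp
        ultimately show ?thesis by (rule DERIV_cong)
      qed
      have \<Phi>b: "\<delta> * N1 x \<le> \<Phi> x \<and> \<Phi> x \<le> 3 * N1 x" if x: "X1 \<le> x" for x
      proof -
        have xM: "M < x" using x X1M by simp
        have xp: "x > 0" using xM M0 by simp
        have a1: "\<bar>(m / \<omega>) * u x\<bar> \<le> (1 - 2 * \<delta>) * N1 x"
        proof -
          have "\<bar>(m / \<omega>) * u x\<bar> = (m / \<bar>\<omega>\<bar>) * \<bar>u x\<bar>" using m0 by (simp add: abs_mult)
          also have "\<dots> \<le> (m / \<bar>\<omega>\<bar>) * N1 x" using ub[OF xM] m0 aw by (intro mult_left_mono) auto
          finally show ?thesis using \<delta>e by simp
        qed
        have a2: "\<bar>(lam / (\<omega> * x)) * v x\<bar> \<le> \<delta> * N1 x"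
        proof -
          have q: "\<bar>lam / (\<omega> * x)\<bar> \<le> \<delta>"
          proof -
            have "\<bar>lam\<bar> = C * (\<bar>\<omega>\<bar> * \<delta>)" using aw \<delta>0 by (simp add: C_def)
            also have "\<dots> \<le> x * (\<bar>\<omega>\<bar> * \<delta>)" using X1 x aw \<delta>0 by (intro mult_right_mono) auto
            finally have "\<bar>lam\<bar> \<le> \<delta> * (\<bar>\<omega>\<bar> * x)" by (simp add: algebra_simps)
            thus ?thesis using xp aw by (simp add: abs_mult abs_divide divide_le_eq)
          qed
          have "\<bar>(lam / (\<omega> * x)) * v x\<bar> = \<bar>lam / (\<omega> * x)\<bar> * \<bar>v x\<bar>" by (simp add: abs_mult)
          also have "\<dots> \<le> \<delta> * N1 x" using mult_mono[OF q vb[OF xM]] \<delta>0 by simp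
          finally show ?thesis .
        qed
        have "\<Phi> x = N1 x + (m / \<omega>) * u x - (lam / (\<omega> * x)) * v x" by (simp add: \<Phi>_def)
        thus ?thesis using abs_le_D1[OF a1] abs_le_D2[OF a1] abs_le_D1[OF a2] abs_le_D2[OF a2] \<delta>0 \<delta>1 N10[of x]
          by (simp add: algebra_simps)
      qed
      have pX1: "N1 X1 > 0" using Nfwd[OF r0 X1(1) pos0] .
      have \<Phi>X1: "\<Phi> X1 > 0" using \<Phi>b[of X1] pX1 \<delta>0 by (smt (verit) mult_pos_pos)
      have grow: "\<Phi> X1 * exp (- C / X1) \<le> \<Phi> y * exp (- C / y)" if y: "X1 \<le> y" for y
      proof (rule gron(1)[OF y, of \<Phi> "\<lambda>x. lam * v x / (\<omega> * x\<^sup>2)" "\<lambda>x. - C / x" "\<lambda>x. C / x\<^sup>2"])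
        show "(\<Phi> has_real_derivative lam * v x / (\<omega> * x\<^sup>2)) (at x) \<and> ((\<lambda>x. - C / x) has_real_derivative C / x\<^sup>2) (at x)"
          if "X1 \<le> x" "x \<le> y" for x
        proof
          have xM: "M < x" using that X1M by simp
          show "(\<Phi> has_real_derivative lam * v x / (\<omega> * x\<^sup>2)) (at x)" using d\<Phi>[OF xM] .
          show "((\<lambda>x. - C / x) has_real_derivative C / x\<^sup>2) (at x)"
            using xM M0 by (auto intro!: derivative_eq_intros simp: power2_eq_square)
        qed
        show "\<forall>x. X1 \<le> x \<and> x \<le> y \<longrightarrow> 0 \<le> lam * v x / (\<omega> * x\<^sup>2) + C / x\<^sup>2 * \<Phi> x"
        proof (intro allI impI)
          fix x assume x: "X1 \<le> x \<and> x \<le> y"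
          hence xM: "M < x" using X1M by simp
          have x2: "x\<^sup>2 > 0" using xM M0 by simp
          have "\<bar>lam * v x / \<omega>\<bar> \<le> \<bar>lam\<bar> / \<bar>\<omega>\<bar> * N1 x"
            using vb[OF xM] aw by (simp add: abs_mult abs_divide mult_left_mono divide_right_mono)
          also have "\<dots> = C * (\<delta> * N1 x)" using aw \<delta>0 by (simp add: C_def)
          also have "\<dots> \<le> C * \<Phi> x" using \<Phi>b[of x] x C0 by (intro mult_left_mono) auto
          finally have "- (lam * v x / \<omega>) \<le> C * \<Phi> x" by (rule abs_le_D2)
          hence "0 \<le> lam * v x / \<omega> + C * \<Phi> x" by linarith
          hence "0 \<le> (lam * v x / \<omega> + C * \<Phi> x) / x\<^sup>2" using x2 by simp
          thus "0 \<le> lam * v x / (\<omega> * x\<^sup>2) + C / x\<^sup>2 * \<Phi> x" by (simp add: add_divide_distrib)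
        qed
      qed
      define c where "c = \<Phi> X1 * exp (- C / X1) / 3"
      have c0: "c > 0" using \<Phi>X1 by (simp add: c_def)
      show False
      proof (rule Finf'[OF X1M c0], intro allI impI)
        fix y assume y: "X1 \<le> y"
        have yp: "y > 0" using y X1M M0 by simp
        have "exp (- C / y) \<le> 1" using C0 yp by simp
        moreover have "\<Phi> y \<ge> 0" using \<Phi>b[OF y] \<delta>0 N10[of y] by (smt (verit) mult_nonneg_nonneg)
        ultimately have "\<Phi> y * exp (- C / y) \<le> \<Phi> y" by (simp add: mult_left_le)
        hence "3 * c \<le> \<Phi> y" using grow[OF y] by (simp add: c_def)
        thus "c \<le> N1 y" using \<Phi>b[OF y] by linarith
      qed
    qed
  next
    case False
    hence VM: "V M \<noteq> 0" .
    define V' where "V' = (\<lambda>x. 2 * \<omega> * x + e * Q)"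
    have dV: "(V has_real_derivative V' x) (at x)" for x
      unfolding V_def V'_def by (auto intro!: derivative_eq_intros simp: power2_eq_square)
    have cV: "continuous_on S V" for S unfolding V_def by (intro continuous_intros)
    define p where "p = (\<lambda>x. m * x * (x - M) / V x)"
    define q where "q = (\<lambda>x. lam * (x - M) / V x)"
    define P' where "P' = (\<lambda>x. (m * (x - M) + m * x) / V x - m * x * (x - M) * V' x / (V x)\<^sup>2)"
    define Q' where "Q' = (\<lambda>x. lam / V x - lam * (x - M) * V' x / (V x)\<^sup>2)"
    have dp: "(p has_real_derivative P' x) (at x)" if "V x \<noteq> 0" for x
    proof -
      have "(p has_real_derivative ((m * (x - M) + m * x) * V x - m * x * (x - M) * V' x) / (V x * V x)) (at x)"
        unfolding p_def using that by (intro DERIV_divide dV) (auto intro!: derivative_eq_intros simp: algebra_simps)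
      moreover have "((m * (x - M) + m * x) * V x - m * x * (x - M) * V' x) / (V x * V x) = P' x"
        using that by (simp add: P'_def field_simps power2_eq_square)
      ultimately show ?thesis by (rule DERIV_cong)
    qed
    have dq: "(q has_real_derivative Q' x) (at x)" if "V x \<noteq> 0" for x
    proof -
      have "(q has_real_derivative (lam * V x - lam * (x - M) * V' x) / (V x * V x)) (at x)"
        unfolding q_def using that by (intro DERIV_divide dV) (auto intro!: derivative_eq_intros simp: algebra_simps)
      moreover have "(lam * V x - lam * (x - M) * V' x) / (V x * V x) = Q' x"
        using that by (simp add: Q'_def field_simps power2_eq_square)
      ultimately show ?thesis by (rule DERIV_cong)
    qed
    have cp: "isCont p M" unfolding p_def using VM cV[of UNIV]
      by (auto intro!: continuous_intros simp: continuous_on_eq_continuous_at)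
    have cq: "isCont q M" unfolding q_def using VM cV[of UNIV]
      by (auto intro!: continuous_intros simp: continuous_on_eq_continuous_at)
    have cV': "isCont V M" using cV[of UNIV] by (simp add: continuous_on_eq_continuous_at)
    have "eventually (\<lambda>x. dist (V x) (V M) < \<bar>V M\<bar> / 2) (at M)"
      using cV' VM unfolding isCont_def tendsto_iff by (meson zero_less_abs_iff half_gt_zero)
    moreover have "eventually (\<lambda>x. dist (p x) (p M) < 1/4) (at M)"
      using cp unfolding isCont_def tendsto_iff by (meson zero_less_divide_1_iff zero_less_numeral)
    moreover have "eventually (\<lambda>x. dist (q x) (q M) < 1/4) (at M)"
      using cq unfolding isCont_def tendsto_iff by (meson zero_less_divide_1_iff zero_less_numeral)
    ultimately have "eventually (\<lambda>x. dist (V x) (V M) < \<bar>V M\<bar> / 2 \<and> dist (p x) (p M) < 1/4 \<and> dist (q x) (q M) < 1/4) (at M)"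
      by (auto elim: eventually_elim2 eventually_mono intro: eventually_conj)
    then obtain d where d0: "d > 0" and dd: "\<And>x. x \<noteq> M \<Longrightarrow> dist x M < d \<Longrightarrow>
        dist (V x) (V M) < \<bar>V M\<bar> / 2 \<and> dist (p x) (p M) < 1/4 \<and> dist (q x) (q M) < 1/4"
      unfolding eventually_at by auto
    have pM: "p M = 0" "q M = 0" by (simp_all add: p_def q_def)
    define d1 where "d1 = d / 2"
    have d10: "d1 > 0" using d0 by (simp add: d1_def)
    define x1 where "x1 = M + d1"
    have x1M: "M < x1" using d10 by (simp add: x1_def)
    have reg: "V x \<noteq> 0 \<and> \<bar>p x\<bar> < 1/4 \<and> \<bar>q x\<bar> < 1/4" if "M \<le> x" "x \<le> x1" for x
    proof (cases "x = M")
      case True thus ?thesis using VM pM by simp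
    next
      case False
      have "dist x M < d" using that d0 by (simp add: x1_def d1_def dist_real_def)
      from dd[OF False this] pM show ?thesis by (auto simp: dist_real_def)
    qed
    have cont: "continuous_on {M..x1} (\<lambda>x. \<bar>P' x\<bar> + \<bar>Q' x\<bar>)"
      unfolding P'_def Q'_def V'_def using reg cV[of "{M..x1}"]
      by (auto intro!: continuous_intros)
    obtain xb where "xb \<in> {M..x1}" and xb: "\<forall>y\<in>{M..x1}. \<bar>P' y\<bar> + \<bar>Q' y\<bar> \<le> \<bar>P' xb\<bar> + \<bar>Q' xb\<bar>"
      using continuous_attains_sup[OF compact_Icc _ cont] x1M by auto
    define B where "B = \<bar>P' xb\<bar> + \<bar>Q' xb\<bar>"
    have B0: "B \<ge> 0" by (simp add: B_def)
    define \<Phi> where "\<Phi> = (\<lambda>x. N1 x + p x * u x - q x * v x)"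
    have d\<Phi>: "(\<Phi> has_real_derivative P' x * u x - Q' x * v x) (at x)" if x: "M < x" "x \<le> x1" for x
    proof -
      have Vx: "V x \<noteq> 0" using reg x by simp
      have D0: "x - M \<noteq> 0" using x by simp
      have "(\<Phi> has_real_derivative 2 * (m * x * v x + lam * u x) / (x - M)
          + (P' x * u x + (- 2 * (V x / (x - M)) * v x + 2 * lam * N1 x) / (x - M) * p x)
          - (Q' x * v x + (2 * (V x / (x - M)) * u x + 2 * m * x * N1 x) / (x - M) * q x)) (at x)"
        unfolding \<Phi>_def
        by (intro DERIV_diff DERIV_add DERIV_mult dN du dv dp dq Vx x)
      moreover have "2 * (m * x * v x + lam * u x) / (x - M)
          + (P' x * u x + (- 2 * (V x / (x - M)) * v x + 2 * lam * N1 x) / (x - M) * p x)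
          - (Q' x * v x + (2 * (V x / (x - M)) * u x + 2 * m * x * N1 x) / (x - M) * q x)
          = P' x * u x - Q' x * v x"
        unfolding p_def q_def using phi_id2[OF D0 Vx] by simp
      ultimately show ?thesis by (rule DERIV_cong)
    qed
    have \<Phi>b: "N1 x / 2 \<le> \<Phi> x \<and> \<Phi> x \<le> 3 * N1 x / 2" if x: "M < x" "x \<le> x1" for x
    proof -
      have a1: "\<bar>p x * u x\<bar> \<le> N1 x / 4"
      proof -
        have "\<bar>p x * u x\<bar> = \<bar>p x\<bar> * \<bar>u x\<bar>" by (simp add: abs_mult)
        also have "\<dots> \<le> (1/4) * N1 x" using mult_mono[of "\<bar>p x\<bar>" "1/4" "\<bar>u x\<bar>" "N1 x"] reg[of x] ub[of x] x by simp
        finally show ?thesis by simp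
      qed
      have a2: "\<bar>q x * v x\<bar> \<le> N1 x / 4"
      proof -
        have "\<bar>q x * v x\<bar> = \<bar>q x\<bar> * \<bar>v x\<bar>" by (simp add: abs_mult)
        also have "\<dots> \<le> (1/4) * N1 x" using mult_mono[of "\<bar>q x\<bar>" "1/4" "\<bar>v x\<bar>" "N1 x"] reg[of x] vb[of x] x by simp
        finally show ?thesis by simp
      qed
      have "\<Phi> x = N1 x + p x * u x - q x * v x" by (simp add: \<Phi>_def)
      thus ?thesis using abs_le_D1[OF a1] abs_le_D2[OF a1] abs_le_D1[OF a2] abs_le_D2[OF a2] by linarith
    qed
    have d\<Phi>b: "\<bar>P' x * u x - Q' x * v x\<bar> \<le> 2 * B * \<Phi> x" if x: "M < x" "x \<le> x1" for x
    proof -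
      have "\<bar>P' x * u x - Q' x * v x\<bar> \<le> \<bar>P' x\<bar> * \<bar>u x\<bar> + \<bar>Q' x\<bar> * \<bar>v x\<bar>"
        by (metis abs_mult abs_triangle_ineq4)
      also have "\<dots> \<le> \<bar>P' x\<bar> * N1 x + \<bar>Q' x\<bar> * N1 x"
        using ub[of x] vb[of x] x by (intro add_mono mult_left_mono) auto
      also have "\<dots> = (\<bar>P' x\<bar> + \<bar>Q' x\<bar>) * N1 x" by (simp add: algebra_simps)
      also have "\<dots> \<le> B * N1 x" unfolding B_def using xb x N10[of x] by (intro mult_right_mono) auto
      also have "\<dots> \<le> B * (2 * \<Phi> x)" using \<Phi>b[OF x] B0 by (intro mult_left_mono) auto
      finally show ?thesis by simp
    qed
    define x2 where "x2 = min r0 x1"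
    have x2: "M < x2" "x2 \<le> x1" "x2 \<le> r0" using r0 x1M by (auto simp: x2_def)
    have px2: "N1 x2 > 0"
    proof (cases "r0 \<le> x1")
      case True thus ?thesis using pos0 by (simp add: x2_def)
    next
      case False thus ?thesis using Nbwd[OF x2(1) x2(3) pos0] by simp
    qed
    have \<Phi>x2: "\<Phi> x2 > 0" using \<Phi>b[OF x2(1) x2(2)] px2 by linarith
    define K where "K = 2 * B"
    have shrink: "\<Phi> x2 * exp (- K * x2) \<le> \<Phi> y * exp (- K * y)" if y: "M < y" "y \<le> x2" for y
    proof (rule gron(2)[OF y(2), of \<Phi> "\<lambda>x. P' x * u x - Q' x * v x" "\<lambda>x. - K * x" "\<lambda>_. - K"])
      show "(\<Phi> has_real_derivative P' x * u x - Q' x * v x) (at x) \<and> ((\<lambda>x. - K * x) has_real_derivative - K) (at x)"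
        if "y \<le> x" "x \<le> x2" for x
        using d\<Phi>[of x] that y x2 by (auto intro!: derivative_eq_intros)
      show "\<forall>x. y \<le> x \<and> x \<le> x2 \<longrightarrow> P' x * u x - Q' x * v x + - K * \<Phi> x \<le> 0"
      proof (intro allI impI)
        fix x assume "y \<le> x \<and> x \<le> x2"
        hence "\<bar>P' x * u x - Q' x * v x\<bar> \<le> K * \<Phi> x" using d\<Phi>b[of x] y x2 by (simp add: K_def)
        hence "P' x * u x - Q' x * v x \<le> K * \<Phi> x" by (rule abs_le_D1)
        thus "P' x * u x - Q' x * v x + - K * \<Phi> x \<le> 0" by linarith
      qed
    qed
    define c where "c = \<Phi> x2 * exp (- K * x2) * 2 / 3"
    have c0: "c > 0" using \<Phi>x2 by (simp add: c_def)
    define dd' where "dd' = min 1 (x2 - M)"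
    have dd'0: "dd' > 0" using x2 by (simp add: dd'_def)
    show False
    proof (rule F0'[OF dd'0 c0], intro allI impI)
      fix y assume y: "M < y \<and> y < M + dd'"
      hence y1: "y - M \<le> 1" "y \<le> x2" by (auto simp: dd'_def)
      have yy: "M < y" using y by simp
      have "exp (- K * y) \<le> 1" using B0 yy M0 by (simp add: K_def)
      moreover have "\<Phi> y \<ge> 0" using \<Phi>b[OF yy] y1 x2 N10[of y] by linarith
      ultimately have "\<Phi> y * exp (- K * y) \<le> \<Phi> y" by (simp add: mult_left_le)
      hence "3 * c / 2 \<le> \<Phi> y" using shrink[OF yy y1(2)] by (simp add: c_def)
      hence "c \<le> N1 y" using \<Phi>b[OF yy] y1 x2 by linarith
      moreover have "c * (y - M) \<le> c" using c0 y1 yy by (simp add: mult_left_le)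
      ultimately show "c * (y - M) \<le> N1 y" by linarith
    qed
  qed
qed


theorem mainTheorem7:
  fixes M a Q m e k :: real
  assumes "a = 0" and "Q \<noteq> 0" and "M = \<bar>Q\<bar>"
    and "M\<^sup>2 = a\<^sup>2 + Q\<^sup>2"
    and "m > 0" and "half_integer k"
  shows "\<not> (\<exists>\<omega>::real. energy_eigenvalue M a Q m e k \<omega>)"
proof
  assume "\<exists>\<omega>::real. energy_eigenvalue M a Q m e k \<omega>"
  then obtain \<omega> lam f1 f2 r0 where rs: "radial_solution M a Q m e k \<omega> lam f1 f2"
    and r0: "M < r0" and nz: "f1 r0 \<noteq> 0 \<or> f2 r0 \<noteq> 0"
    and gi: "(\<lambda>r. ((cmod (f1 r))\<^sup>2 + (cmod (f2 r))\<^sup>2) * (r\<^sup>2 + a\<^sup>2) / (r - M)\<^sup>2) integrable_on {M<..}"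
    unfolding energy_eigenvalue_def by blast
  have M0: "M > 0" using assms(2,3) by simp
  show False
    by (rule core[of M Q m e k \<omega> lam f1 f2 r0]) (use rs r0 nz gi M0 assms in simp_all)
qed

end
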